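(* Let $\varrho=(\varrho_m)_{1\le m\le n-1}$ and $\sigma=(\sigma_m)_{1\le m\le n-1}$ be two independent uniformly random permutations of $\{1,\dots,n-1\}$. Then $(U_1,\dots,U_{n-1})$ is equal in distribution to the process \[ \Bigl(\#\{1\le m\le n-1:\varrho_m<k<\sigma_m\}+1\Bigr)_{1\le k\le n-1}. \]
   Context: Urn process: let $n\ge2$. An urn initially contains $n$ black balls. It is emptied in $n$ steps: in each of the first $n-1$ steps a uniformly random pair of balls is removed from the urn and replaced by one red ball; in step $n$ the last remaining ball is removed. $U_k$ is the number of red balls in the urn after $k$ steps, $0\le k\le n$. *)

theory Defs
  imports "HOL-Probability.Probability" "HOL-Combinatorics.Permutations"
begin

datatype colour = Black | Red

text \<open>An urn is a list of coloured balls; the balls are the positions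
 0,...,length-1 (distinguishable). One step: remove a uniformly random
 2-element set of balls and add one red ball.\<close>
definition urn_step :: "colour list \<Rightarrow> colour list pmf" where
  "urn_step u = map_pmf
     (\<lambda>S. [u ! i. i \<leftarrow> [0..<length u], i \<notin> S] @ [Red])
     (pmf_of_set {S. S \<subseteq> {..<length u} \<and> card S = 2})"

fun urn_traj :: "nat \<Rightarrow> colour list \<Rightarrow> colour list list pmf" where
  "urn_traj 0 u = return_pmf []"
| "urn_traj (Suc k) u =
     bind_pmf (urn_step u) (\<lambda>u'. map_pmf (\<lambda>rest. u' # rest) (urn_traj k u'))"

text \<open>Law of (U_1,...,U_{n-1}), U_k = number of red balls after k steps,
 starting from n black balls.\<close>
definition U_process :: "nat \<Rightarrow> nat list pmf" where
  "U_process n = map_pmf (map (\<lambda>u. count_list u Red))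
     (urn_traj (n - 1) (replicate n Black))"

definition unif_perm :: "nat \<Rightarrow> (nat \<Rightarrow> nat) pmf" where
  "unif_perm n = pmf_of_set {f. f permutes {1..n-1}}"

definition perm_process :: "nat \<Rightarrow> nat list pmf" where
  "perm_process n = map_pmf
     (\<lambda>(\<rho>, \<sigma>). map (\<lambda>k. card {m \<in> {1..n-1}. \<rho> m < k \<and> k < \<sigma> m} + 1) [1..<n])
     (pair_pmf (unif_perm n) (unif_perm n))"

end

theory Submission
  imports Defs
begin

lemma pmf_eq_except:
  fixes p q :: "'a pmf"
  assumes "\<And>i. i \<noteq> i0 \<Longrightarrow> pmf p i = pmf q i"
  shows "p = q"
proof (rule pmf_eqI)
  fix i
  have c: "measure p (-{i0}) = measure q (-{i0})"
    unfolding measure_pmf_conv_infsetsum by (rule infsetsum_cong) (use assms in auto)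
  have "pmf p i0 = pmf q i0"
  proof -
    have "pmf p i0 = 1 - measure p (-{i0})"
      using measure_pmf.prob_compl[of "{i0}" p] by (simp add: measure_pmf_single Compl_eq_Diff_UNIV)
    also have "\<dots> = 1 - measure q (-{i0})" using c by simp
    also have "\<dots> = pmf q i0"
      using measure_pmf.prob_compl[of "{i0}" q] by (simp add: measure_pmf_single Compl_eq_Diff_UNIV)
    finally show ?thesis .
  qed
  then show "pmf p i = pmf q i" using assms by (cases "i = i0") auto
qed

definition g :: "nat \<Rightarrow> nat \<Rightarrow> nat \<Rightarrow> real" where
  "g t r i = (if i = r + 1 then real ((t - r) * (t - r - 1)) / real (t * (t - 1))
             else if i + 1 = r then real (r * (r - 1)) / real (t * (t - 1)) else 0)"

definition twosets :: "nat \<Rightarrow> nat set set" where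
  "twosets t = {S. S \<subseteq> {..<t} \<and> card S = 2}"

lemma two_choose: "2 * (a choose 2) = a * (a - 1)"
proof -
  have "even (a * (a - 1))" by (cases a) auto
  then show ?thesis by (simp add: choose_two)
qed

lemma real_two_choose: "real (a choose 2) = real (a * (a - 1)) / 2"
proof -
  have "real (2 * (a choose 2)) = real (a * (a - 1))" by (simp only: two_choose)
  then show ?thesis by simp
qed

lemma card_twosets: "card (twosets t) = t choose 2"
  unfolding twosets_def using n_subsets[of "{..<t}" 2] by simp

lemma twosets_ne: "2 \<le> t \<Longrightarrow> twosets t \<noteq> {}"
  using card_twosets[of t] by (metis card.empty binomial_eq_0_iff not_less)

lemma finite_twosets: "finite (twosets t)"
  unfolding twosets_def by (rule finite_subset[of _ "Pow {..<t}"]) auto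

lemma step_char:
  assumes t: "2 \<le> t" and R: "R \<subseteq> {..<t}" "card R = r" and i: "i \<noteq> r"
  shows "pmf (map_pmf (\<lambda>S. r + 1 - card (S \<inter> R)) (pmf_of_set (twosets t))) i = g t r i"
proof -
  have fR: "finite R" using R finite_subset by blast
  have ne: "twosets t \<noteq> {}" using twosets_ne t .
  have "pmf (map_pmf (\<lambda>S. r + 1 - card (S \<inter> R)) (pmf_of_set (twosets t))) i
      = card (twosets t \<inter> {S. r + 1 - card (S \<inter> R) = i}) / card (twosets t)"
    using ne finite_twosets by (simp add: pmf_map measure_pmf_of_set vimage_def)
  also have "\<dots> = g t r i"
  proof -
    have le: "card (S \<inter> R) \<le> r" for S using R fR by (metis Int_lower2 card_mono)
    have le2: "S \<in> twosets t \<Longrightarrow> card (S \<inter> R) \<le> 2" for S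
      unfolding twosets_def by (metis (mono_tags, lifting) Int_lower1 card_mono finite_lessThan finite_subset mem_Collect_eq)
    have fS: "S \<in> twosets t \<Longrightarrow> finite S \<and> card S = 2" for S
      unfolding twosets_def using finite_subset by blast
    show ?thesis
    proof (cases "i = r + 1")
      case True
      have e: "S \<in> twosets t \<Longrightarrow> (r + 1 - card (S \<inter> R) = i \<longleftrightarrow> S \<inter> R = {})" for S
      proof -
        assume S: "S \<in> twosets t"
        then have f: "finite (S \<inter> R)" using fS by blast
        have "(r + 1 - card (S \<inter> R) = i) \<longleftrightarrow> card (S \<inter> R) = 0"
          using True le[of S] by auto
        then show ?thesis using f by simp
      qed
      have "twosets t \<inter> {S. r + 1 - card (S \<inter> R) = i} = {S. S \<subseteq> {..<t} - R \<and> card S = 2}"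
        using e unfolding twosets_def by blast
      also have "card \<dots> = (t - r) choose 2"
        using n_subsets[of "{..<t} - R" 2] R fR by (simp add: card_Diff_subset)
      finally show ?thesis using True card_twosets[of t] by (simp add: g_def real_two_choose)
    next
      case False
      show ?thesis
      proof (cases "i + 1 = r")
        case True
        have e: "S \<in> twosets t \<Longrightarrow> (r + 1 - card (S \<inter> R) = i \<longleftrightarrow> S \<subseteq> R)" for S
        proof -
          assume S: "S \<in> twosets t"
          have "(r + 1 - card (S \<inter> R) = i) \<longleftrightarrow> card (S \<inter> R) = card S"
            using True le[of S] fS[OF S] by auto
          also have "\<dots> \<longleftrightarrow> S \<inter> R = S"
            using fS[OF S] by (metis Int_lower1 card_subset_eq)
          finally show ?thesis by blast
        qed
        have "twosets t \<inter> {S. r + 1 - card (S \<inter> R) = i} = {S. S \<subseteq> R \<and> card S = 2}"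
          using e R unfolding twosets_def by blast
        also have "card \<dots> = r choose 2"
          using n_subsets[of R 2] R fR by simp
        finally show ?thesis using True False card_twosets[of t] by (simp add: g_def real_two_choose)
      next
        case F2: False
        have "S \<in> twosets t \<Longrightarrow> r + 1 - card (S \<inter> R) \<noteq> i" for S
          using F2 False i le[of S] le2[of S] by auto
        then have "twosets t \<inter> {S. r + 1 - card (S \<inter> R) = i} = {}"
          by blast
        then show ?thesis using F2 False by (simp add: g_def)
      qed
    qed
  qed
  finally show ?thesis .
qed

definition step :: "nat \<Rightarrow> nat \<Rightarrow> nat pmf" where
  "step t r = map_pmf (\<lambda>S. r + 1 - card (S \<inter> {..<r})) (pmf_of_set (twosets t))"

lemma step_unique:
  assumes "2 \<le> t" "r \<le> t" "\<And>i. i \<noteq> r \<Longrightarrow> pmf p i = g t r i"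
  shows "step t r = p"
  unfolding step_def
  by (rule pmf_eq_except[of r]) (use assms step_char[of t "{..<r}" r] in auto)

fun V :: "nat \<Rightarrow> nat \<Rightarrow> nat list pmf" where
  "V (Suc (Suc t)) r = bind_pmf (step (Suc (Suc t)) r) (\<lambda>r'. map_pmf (Cons r') (V (Suc t) r'))"
| "V _ r = return_pmf []"

abbreviation cnt :: "colour list \<Rightarrow> nat" where "cnt u \<equiv> count_list u Red"

lemma count_filter:
  "count_list (map f (filter P [0..<t])) a = card {i. i < t \<and> P i \<and> f i = a}"
proof (induct t)
  case 0 then show ?case by simp
next
  case (Suc t)
  have e: "{i. i < Suc t \<and> P i \<and> f i = a} =
     {i. i < t \<and> P i \<and> f i = a} \<union> (if P t \<and> f t = a then {t} else {})"
    by (auto simp: less_Suc_eq)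
  show ?case using Suc by (simp add: e card_insert_if)
qed

lemma comp_eq: "[u ! i. i \<leftarrow> [0..<t], i \<notin> S] = map ((!) u) (filter (\<lambda>i. i \<notin> S) [0..<t])"
  by (induct t) auto

lemma cnt_card: "cnt u = card {i. i < length u \<and> u ! i = Red}"
  using count_filter[of "(!) u" "\<lambda>i. True" "length u" Red] by (simp add: map_nth)

lemma urn_step_len:
  assumes "2 \<le> length u" "u' \<in> set_pmf (urn_step u)"
  shows "length u' = length u - 1"
proof -
  have ne: "{S. S \<subseteq> {..<length u} \<and> card S = 2} \<noteq> {}"
    using twosets_ne[OF assms(1)] unfolding twosets_def .
  have fin: "finite {S. S \<subseteq> {..<length u} \<and> card S = 2}"
    using finite_twosets unfolding twosets_def .
  obtain S where S: "S \<subseteq> {..<length u}" "card S = 2"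
    and u': "u' = [u ! i. i \<leftarrow> [0..<length u], i \<notin> S] @ [Red]"
    using assms(2) unfolding urn_step_def set_map_pmf set_pmf_of_set[OF ne fin] by blast
  have "length (filter (\<lambda>i. i \<notin> S) [0..<length u]) = card ({..<length u} - S)"
    by (simp add: length_filter_conv_card) (rule arg_cong[where f=card], auto)
  also have "\<dots> = length u - 2" using S by (simp add: card_Diff_subset finite_subset)
  finally show ?thesis using u' assms(1) by (simp only: comp_eq length_append length_map) simp
qed

lemma urn_step_cnt:
  assumes "length u = t" "2 \<le> t"
  shows "map_pmf cnt (urn_step u) = step t (cnt u)"
proof -
  define R where "R = {i. i < t \<and> u ! i = Red}"
  have cR: "card R = cnt u" using assms by (simp add: R_def cnt_card)
  have R: "R \<subseteq> {..<t}" by (auto simp: R_def)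
  have fR: "finite R" using R finite_subset by blast
  have "map_pmf cnt (urn_step u) = map_pmf (\<lambda>S. cnt u + 1 - card (S \<inter> R)) (pmf_of_set (twosets t))"
    unfolding urn_step_def pmf.map_comp twosets_def[symmetric] assms(1)
  proof (rule map_pmf_cong[OF refl])
    fix S assume "S \<in> set_pmf (pmf_of_set (twosets t))"
    then have S: "S \<subseteq> {..<t}" "card S = 2"
      using twosets_ne[OF assms(2)] finite_twosets[of t] by (auto simp: twosets_def)
    have "(cnt \<circ> (\<lambda>S. [u ! i. i \<leftarrow> [0..<t], i \<notin> S] @ [Red])) S = card (R - S) + 1"
      by (simp add: comp_eq count_filter R_def) (rule arg_cong[where f=card], auto)
    also have "card (R - S) = card R - card (S \<inter> R)"
      using fR by (metis card_Diff_subset_Int Int_commute finite_Int)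
    finally show "(cnt \<circ> (\<lambda>S. [u ! i. i \<leftarrow> [0..<t], i \<notin> S] @ [Red])) S = cnt u + 1 - card (S \<inter> R)"
      using cR fR by (metis Int_lower2 Nat.add_diff_assoc2 card_mono)
  qed
  also have "\<dots> = step t (cnt u)"
    by (rule step_unique[symmetric]) (use assms R cR step_char[of t R "cnt u"] count_le_length[of u Red] in auto)
  finally show ?thesis .
qed

lemma urn_V: "length u = Suc k \<Longrightarrow> map_pmf (map cnt) (urn_traj k u) = V (Suc k) (cnt u)"
proof (induct k arbitrary: u)
  case 0 then show ?case by simp
next
  case (Suc k)
  have "map_pmf (map cnt) (urn_traj (Suc k) u)
      = bind_pmf (urn_step u) (\<lambda>u'. map_pmf (Cons (cnt u')) (map_pmf (map cnt) (urn_traj k u')))"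
    by (simp only: urn_traj.simps map_bind_pmf pmf.map_comp o_def list.map)
  also have "\<dots> = bind_pmf (urn_step u) (\<lambda>u'. map_pmf (Cons (cnt u')) (V (Suc k) (cnt u')))"
  proof (rule bind_pmf_cong[OF refl])
    fix u' assume "u' \<in> set_pmf (urn_step u)"
    then have "length u' = Suc k" using urn_step_len[of u u'] Suc.prems by simp
    then show "map_pmf (Cons (cnt u')) (map_pmf (map cnt) (urn_traj k u')) = map_pmf (Cons (cnt u')) (V (Suc k) (cnt u'))"
      using Suc.hyps by simp
  qed
  also have "\<dots> = bind_pmf (map_pmf cnt (urn_step u)) (\<lambda>r'. map_pmf (Cons r') (V (Suc k) r'))"
    by (simp only: bind_map_pmf)
  also have "map_pmf cnt (urn_step u) = step (Suc (Suc k)) (cnt u)"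
    using urn_step_cnt[of u "Suc (Suc k)"] Suc.prems by simp
  finally show ?case by (simp only: V.simps(1))
qed

lemma U_V: "1 \<le> n \<Longrightarrow> U_process n = V n 0"
  unfolding U_process_def using urn_V[of "replicate n Black" "n - 1"] by simp

lemma step_n0: "2 \<le> n \<Longrightarrow> step n 0 = return_pmf 1"
  by (rule step_unique) (auto simp: g_def indicator_def)

lemma fval:
  assumes "x \<in> X" "y \<in> Y" "finite Y"
  shows "card ((Y - {y}) - (X - {x})) = (if y \<in> X then (if x \<in> Y \<and> x \<noteq> y then card (Y - X) + 1 else card (Y - X))
                                        else (if x \<in> Y then card (Y - X) else card (Y - X) - 1))"
proof (cases "y \<in> X")
  case True
  show ?thesis
  proof (cases "x \<in> Y \<and> x \<noteq> y")
    case True2: True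
    have "(Y - {y}) - (X - {x}) = insert x (Y - X)" using True True2 assms by auto
    then show ?thesis using True True2 assms by (simp add: card_insert_disjoint)
  next
    case False
    have "(Y - {y}) - (X - {x}) = Y - X" using True False assms by auto
    then show ?thesis using True False by simp
  qed
next
  case False
  have yD: "y \<in> Y - X" using False assms by simp
  have pos: "card (Y - X) \<ge> 1" using yD assms(3)
    by (metis One_nat_def Suc_leI card_gt_0_iff empty_iff finite_Diff)
  show ?thesis
  proof (cases "x \<in> Y")
    case True
    have "(Y - {y}) - (X - {x}) = insert x (Y - X - {y})" using True False assms by auto
    then show ?thesis using True False assms pos yD by (simp add: card_insert_disjoint)
  next
    case F2: False
    have "(Y - {y}) - (X - {x}) = Y - X - {y}" using F2 False assms by auto
    then show ?thesis using F2 False assms yD by simp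
  qed
qed

lemma pair_pmf_of_set:
  assumes "finite X" "finite Y" "X \<noteq> {}" "Y \<noteq> {}"
  shows "pair_pmf (pmf_of_set X) (pmf_of_set Y) = pmf_of_set (X \<times> Y)"
proof (rule pmf_eqI)
  fix z :: "'a \<times> 'b"
  obtain a b where z: "z = (a, b)" by (cases z)
  show "pmf (pair_pmf (pmf_of_set X) (pmf_of_set Y)) z = pmf (pmf_of_set (X \<times> Y)) z"
    using assms unfolding z
    by (simp add: pmf_pair pmf_of_set[OF assms(3,1)] pmf_of_set[OF assms(4,2)] card_cartesian_product indicator_def)
qed

lemma perm_step:
  fixes X Y :: "'a set"
  assumes fX: "finite X" and fY: "finite Y" and c: "card X = Suc (card Y)" and Yne: "Y \<noteq> {}"
  shows "map_pmf (\<lambda>(x, y). card ((Y - {y}) - (X - {x})) + 1) (pair_pmf (pmf_of_set X) (pmf_of_set Y))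
       = step (card X) (card (Y - X) + 1)"
proof -
  define f where "f = (\<lambda>(x, y). card ((Y - {y}) - (X - {x})) + 1)"
  define d where "d = card (Y - X)"
  define m where "m = card (X \<inter> Y)"
  have Xne: "X \<noteq> {}" using c by auto
  have dm: "card Y = m + d" unfolding m_def d_def using fY
    by (metis Int_commute card_Diff_subset_Int card_mono finite_Int inf_le2 le_add_diff_inverse finite_Diff)
  have cXY: "card (X - Y) = d + 1" using c dm fX fY unfolding m_def
    by (simp add: card_Diff_subset_Int)
  have t2: "2 \<le> card X" using c Yne fY by (simp add: Suc_le_eq card_gt_0_iff)
  have P: "pair_pmf (pmf_of_set X) (pmf_of_set Y) = pmf_of_set (X \<times> Y)"
    using pair_pmf_of_set fX fY Xne Yne by blast
  have pm: "pmf (map_pmf f (pmf_of_set (X \<times> Y))) i = card ((X \<times> Y) \<inter> f -` {i}) / card (X \<times> Y)" for i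
    using fX fY Xne Yne by (simp add: pmf_map measure_pmf_of_set)
  have fv: "(x, y) \<in> X \<times> Y \<Longrightarrow> f (x, y) = (if y \<in> X then (if x \<in> Y \<and> x \<noteq> y then d + 2 else d + 1)
                                        else (if x \<in> Y then d + 1 else d))" for x y
    using fval[of x X y Y] fY unfolding f_def d_def
    using card_gt_0_iff[of "Y - X"] fY
    by (cases "y \<in> X"; cases "x \<in> Y"; auto)
  have "map_pmf f (pmf_of_set (X \<times> Y)) = step (card X) (d + 1)"
  proof (rule step_unique[symmetric])
    show "2 \<le> card X" by (rule t2)
    show "d + 1 \<le> card X" using c dm by simp
    fix i assume i: "i \<noteq> d + 1"
    show "pmf (map_pmf f (pmf_of_set (X \<times> Y))) i = g (card X) (d + 1) i"
    proof (cases "i = d + 2")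
      case True
      have "(X \<times> Y) \<inter> f -` {i} = (X \<inter> Y) \<times> (X \<inter> Y) - (\<lambda>a. (a, a)) ` (X \<inter> Y)"
      proof (rule set_eqI)
        fix z :: "'a \<times> 'a" obtain x y where z: "z = (x, y)" by (cases z)
        show "z \<in> (X \<times> Y) \<inter> f -` {i} \<longleftrightarrow> z \<in> (X \<inter> Y) \<times> (X \<inter> Y) - (\<lambda>a. (a, a)) ` (X \<inter> Y)"
          unfolding z using True fv[of x y] by (cases "(x, y) \<in> X \<times> Y") auto
      qed
      moreover have "card ((X \<inter> Y) \<times> (X \<inter> Y) - (\<lambda>a. (a, a)) ` (X \<inter> Y)) = m * m - m"
        using fX unfolding m_def
        by (subst card_Diff_subset) (auto simp: card_image inj_on_def card_cartesian_product)
      moreover have "card X - (d + 1) = m" using c dm by simp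
      ultimately show ?thesis using True pm[of i] c dm
        by (simp add: g_def card_cartesian_product algebra_simps diff_mult_distrib2)
    next
      case False
      show ?thesis
      proof (cases "i + 1 = d + 1")
        case True
        have "(X \<times> Y) \<inter> f -` {i} = (X - Y) \<times> (Y - X)"
      proof (rule set_eqI)
        fix z :: "'a \<times> 'a" obtain x y where z: "z = (x, y)" by (cases z)
        show "z \<in> (X \<times> Y) \<inter> f -` {i} \<longleftrightarrow> z \<in> (X - Y) \<times> (Y - X)"
          unfolding z using True fv[of x y] by (cases "(x, y) \<in> X \<times> Y") auto
      qed
        then show ?thesis using True False pm[of i] c dm cXY
          by (simp add: g_def card_cartesian_product d_def algebra_simps)
      next
        case F2: False
        have "(X \<times> Y) \<inter> f -` {i} = {}"
      proof (rule set_eqI)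
        fix z :: "'a \<times> 'a" obtain x y where z: "z = (x, y)" by (cases z)
        show "z \<in> (X \<times> Y) \<inter> f -` {i} \<longleftrightarrow> z \<in> {}"
          unfolding z using F2 False i fv[of x y] by (cases "(x, y) \<in> X \<times> Y") auto
      qed
        then show ?thesis using F2 False pm[of i] by (simp add: g_def)
      qed
    qed
  qed
  then show ?thesis using P unfolding f_def d_def by simp
qed

fun stl :: "'a list \<Rightarrow> 'a list \<Rightarrow> nat list" where
  "stl (x # xs) (y # ys) = (card (set ys - set xs) + 1) # stl xs ys"
| "stl _ _ = []"

abbreviation PL :: "'a set \<Rightarrow> 'a list pmf" where "PL X \<equiv> pmf_of_set (permutations_of_set X)"

lemma set_PL: "finite X \<Longrightarrow> set_pmf (PL X) = permutations_of_set X"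
  by (simp add: set_pmf_of_set)

lemma stl_Nil2: "stl xs [] = []" by (cases xs) auto

lemma perm_V:
  fixes X Y :: "'a set"
  shows "card Y = k \<Longrightarrow> finite X \<Longrightarrow> finite Y \<Longrightarrow> card X = Suc k \<Longrightarrow>
     map_pmf (\<lambda>(P, Q). stl P Q) (pair_pmf (PL X) (PL Y)) = V (Suc k) (card (Y - X) + 1)"
proof (induct k arbitrary: X Y)
  case 0
  then have Y: "Y = {}" by simp
  have "map_pmf (\<lambda>(P, Q). stl P Q) (pair_pmf (PL X) (PL Y)) = map_pmf (\<lambda>_. []) (pair_pmf (PL X) (PL Y))"
    by (rule map_pmf_cong[OF refl]) (auto simp: Y pmf_of_set_singleton stl_Nil2)
  then show ?case by simp
next
  case (Suc k)
  define F where "F = (\<lambda>(P, Q). stl P (Q :: 'a list))"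
  define r' where "r' = (\<lambda>x y. card ((Y - {y}) - (X - {x})) + 1)"
  define G where "G = (\<lambda>r. map_pmf (Cons r) (V (Suc k) r))"
  have Yne: "Y \<noteq> {}" using Suc by auto
  have Xne: "X \<noteq> {}" using Suc by auto
  have "pair_pmf (PL X) (PL Y) = bind_pmf (pmf_of_set X) (\<lambda>x. bind_pmf (PL (X - {x})) (\<lambda>xs.
          bind_pmf (pmf_of_set Y) (\<lambda>y. bind_pmf (PL (Y - {y})) (\<lambda>ys. return_pmf (x # xs, y # ys)))))"
    using Suc.prems Xne Yne
    by (simp add: random_permutation_of_set pair_pmf_def bind_assoc_pmf bind_return_pmf)
  then have "map_pmf F (pair_pmf (PL X) (PL Y)) = bind_pmf (pmf_of_set X) (\<lambda>x. bind_pmf (PL (X - {x})) (\<lambda>xs.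
          bind_pmf (pmf_of_set Y) (\<lambda>y. bind_pmf (PL (Y - {y})) (\<lambda>ys. return_pmf (stl (x # xs) (y # ys))))))"
    by (simp add: map_bind_pmf F_def)
  also have "\<dots> = bind_pmf (pmf_of_set X) (\<lambda>x. bind_pmf (pmf_of_set Y) (\<lambda>y. bind_pmf (PL (X - {x})) (\<lambda>xs.
          bind_pmf (PL (Y - {y})) (\<lambda>ys. return_pmf (stl (x # xs) (y # ys))))))"
    by (rule bind_pmf_cong[OF refl], rule bind_commute_pmf)
  also have "\<dots> = bind_pmf (pmf_of_set X) (\<lambda>x. bind_pmf (pmf_of_set Y) (\<lambda>y. G (r' x y)))"
  proof (intro bind_pmf_cong[OF refl])
    fix x y assume x: "x \<in> set_pmf (pmf_of_set X)" and y: "y \<in> set_pmf (pmf_of_set Y)"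
    then have x: "x \<in> X" and y: "y \<in> Y" using Suc.prems Xne Yne by auto
    have fin: "finite (X - {x})" "finite (Y - {y})" using Suc.prems by auto
    have "bind_pmf (PL (X - {x})) (\<lambda>xs. bind_pmf (PL (Y - {y})) (\<lambda>ys. return_pmf (stl (x # xs) (y # ys))))
        = bind_pmf (PL (X - {x})) (\<lambda>xs. bind_pmf (PL (Y - {y})) (\<lambda>ys. return_pmf (r' x y # F (xs, ys))))"
    proof (intro bind_pmf_cong[OF refl])
      fix xs ys assume a: "xs \<in> set_pmf (PL (X - {x}))" "ys \<in> set_pmf (PL (Y - {y}))"
      have "xs \<in> permutations_of_set (X - {x})" "ys \<in> permutations_of_set (Y - {y})"
        using a unfolding set_PL[OF fin(1)] set_PL[OF fin(2)] by auto
      then have "set xs = X - {x}" "set ys = Y - {y}" by (auto dest: permutations_of_setD)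
      then show "return_pmf (stl (x # xs) (y # ys)) = return_pmf (r' x y # F (xs, ys))"
        by (simp add: r'_def F_def)
    qed
    also have "\<dots> = map_pmf (Cons (r' x y)) (map_pmf F (pair_pmf (PL (X - {x})) (PL (Y - {y}))))"
      by (simp add: pair_pmf_def map_bind_pmf bind_assoc_pmf bind_return_pmf)
    also have "map_pmf F (pair_pmf (PL (X - {x})) (PL (Y - {y}))) = V (Suc k) (r' x y)"
      unfolding F_def r'_def
      by (rule Suc.hyps) (use Suc.prems x y in auto)
    finally show "bind_pmf (PL (X - {x})) (\<lambda>xs. bind_pmf (PL (Y - {y})) (\<lambda>ys. return_pmf (stl (x # xs) (y # ys))))
        = G (r' x y)" by (simp add: G_def)
  qed
  also have "\<dots> = bind_pmf (map_pmf (\<lambda>(x, y). r' x y) (pair_pmf (pmf_of_set X) (pmf_of_set Y))) G"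
    by (simp add: bind_map_pmf pair_pmf_def bind_assoc_pmf bind_return_pmf)
  also have "map_pmf (\<lambda>(x, y). r' x y) (pair_pmf (pmf_of_set X) (pmf_of_set Y)) = step (card X) (card (Y - X) + 1)"
    unfolding r'_def by (rule perm_step) (use Suc.prems Yne in auto)
  finally show ?case using Suc.prems by (simp add: G_def F_def)
qed

lemma stl_explicit:
  "length xs = Suc (length ys) \<Longrightarrow>
   stl xs ys = map (\<lambda>j. card (set (drop (Suc j) ys) - set (drop (Suc j) xs)) + 1) [0..<length ys]"
proof (induct ys arbitrary: xs)
  case Nil then show ?case by (simp add: stl_Nil2)
next
  case (Cons y ys)
  then obtain x xs' where xs: "xs = x # xs'" by (cases xs) auto
  have l: "length xs' = Suc (length ys)" using Cons.prems xs by simp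
  show ?case
    unfolding xs stl.simps Cons.hyps[OF l]
    by (simp add: upt_conv_Cons map_Suc_upt[symmetric] del: upt_Suc)
qed

definition hh :: "nat \<Rightarrow> (nat \<Rightarrow> nat) \<Rightarrow> nat list" where
  "hh n \<rho> = map (inv \<rho>) [1..<n]"

lemma set_upt1: "set [1..<n] = {1..n - 1}" by auto

lemma hh_bij:
  assumes n: "1 \<le> n"
  shows "bij_betw (hh n) {f. f permutes {1..n - 1}} (permutations_of_set {1..n - 1})"
proof -
  let ?I = "{1..n - 1}"
  have inj: "inj_on (hh n) {f. f permutes ?I}"
  proof (rule inj_onI)
    fix \<rho> \<sigma> assume r: "\<rho> \<in> {f. f permutes ?I}" and s: "\<sigma> \<in> {f. f permutes ?I}" and e: "hh n \<rho> = hh n \<sigma>"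
    have r': "inv \<rho> permutes ?I" using r permutes_inv by blast
    have s': "inv \<sigma> permutes ?I" using s permutes_inv by blast
    have "\<forall>j \<in> set [1..<n]. inv \<rho> j = inv \<sigma> j" using e unfolding hh_def map_eq_conv by blast
    then have "inv \<rho> j = inv \<sigma> j" for j
      using permutes_not_in[OF r', of j] permutes_not_in[OF s', of j] by (cases "j \<in> ?I") (auto simp: set_upt1)
    then have "inv \<rho> = inv \<sigma>" by blast
    then show "\<rho> = \<sigma>" using permutes_inv_inv r s by (metis mem_Collect_eq)
  qed
  have img: "hh n ` {f. f permutes ?I} = permutations_of_set ?I"
  proof (intro equalityI subsetI)
    fix L assume "L \<in> hh n ` {f. f permutes ?I}"
    then obtain \<rho> where r: "\<rho> permutes ?I" and L: "L = hh n \<rho>" by blast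
    have r': "inv \<rho> permutes ?I" using r permutes_inv by blast
    have "set L = ?I" unfolding L hh_def set_map set_upt1 using permutes_image[OF r'] by simp
    moreover have "distinct L" unfolding L hh_def
      by (simp add: distinct_map permutes_inj_on[OF r'])
    ultimately show "L \<in> permutations_of_set ?I" by (rule permutations_of_setI)
  next
    fix L assume L: "L \<in> permutations_of_set ?I"
    have sL: "set L = ?I" and dL: "distinct L" using permutations_of_setD[OF L] by auto
    have lL: "length L = n - 1" using length_finite_permutations_of_set[OF L] by simp
    define f where "f = (\<lambda>j. if j \<in> ?I then L ! (j - 1) else j)"
    have fI: "f ` ?I \<subseteq> ?I"
    proof
      fix y assume "y \<in> f ` ?I"
      then obtain x where x: "x \<in> ?I" "y = L ! (x - 1)" unfolding f_def by auto
      have "x - 1 < length L" using x lL by auto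
      then have "y \<in> set L" using x nth_mem by blast
      then show "y \<in> ?I" using sL by simp
    qed
    have injf: "inj_on f ?I"
      unfolding f_def inj_on_def using dL lL by (auto simp: nth_eq_iff_index_eq)
    have "f ` ?I = ?I"
      using fI injf by (metis card_image card_subset_eq finite_atLeastAtMost)
    then have bf: "bij_betw f ?I ?I" using injf by (simp add: bij_betw_def)
    have pf: "f permutes ?I"
    proof (rule bij_imp_permutes[OF bf])
      fix x assume "x \<notin> ?I" then show "f x = x" unfolding f_def by (simp only: if_False)
    qed
    define \<rho> where "\<rho> = inv f"
    have pr: "\<rho> permutes ?I" unfolding \<rho>_def using pf permutes_inv by blast
    have "inv \<rho> = f" unfolding \<rho>_def using permutes_inv_inv[OF pf] .
    then have "hh n \<rho> = map f [1..<n]" by (simp add: hh_def)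
    also have "\<dots> = L"
      by (rule nth_equalityI) (use lL n in \<open>auto simp: f_def\<close>)
    finally show "L \<in> hh n ` {f. f permutes ?I}" using pr by blast
  qed
  show ?thesis using inj img by (simp add: bij_betw_def)
qed

lemma stat_eq:
  assumes n: "2 \<le> n" and r: "\<rho> permutes {1..n - 1}" and s: "\<sigma> permutes {1..n - 1}"
  shows "map (\<lambda>k. card {m \<in> {1..n - 1}. \<rho> m < k \<and> k < \<sigma> m} + 1) [1..<n] = 1 # stl (hh n \<rho>) (tl (hh n \<sigma>))"
proof -
  let ?I = "{1..n - 1}"
  have tl: "tl (hh n \<sigma>) = map (inv \<sigma>) [2..<n]"
    unfolding hh_def using n by (simp add: map_tl[symmetric] upt_conv_Cons numeral_2_eq_2)
  have st: "stl (hh n \<rho>) (tl (hh n \<sigma>)) = map (\<lambda>j. card (set (drop (Suc j) (map (inv \<sigma>) [2..<n])) - set (drop (Suc j) (hh n \<rho>))) + 1) [0..<n - 2]"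
    unfolding tl using n by (subst stl_explicit) (auto simp: hh_def)
  have bs: "bij \<sigma>" "bij \<rho>" using r s permutes_bij by blast+
  have key: "card (set (drop (Suc j) (map (inv \<sigma>) [2..<n])) - set (drop (Suc j) (hh n \<rho>)))
     = card {m \<in> ?I. \<rho> m < j + 2 \<and> j + 2 < \<sigma> m}" for j
  proof -
    have "set (drop (Suc j) (map (inv \<sigma>) [2..<n])) = \<sigma> -` {j + 3..<n}"
      using bs by (simp add: drop_map bij_vimage_eq_inv_image eval_nat_numeral)
    moreover have "set (drop (Suc j) (hh n \<rho>)) = \<rho> -` {j + 2..<n}"
      using bs by (simp add: hh_def drop_map bij_vimage_eq_inv_image)
    moreover have "\<sigma> -` {j + 3..<n} - \<rho> -` {j + 2..<n} = {m \<in> ?I. \<rho> m < j + 2 \<and> j + 2 < \<sigma> m}"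
    proof (intro equalityI subsetI)
      fix m assume m: "m \<in> \<sigma> -` {j + 3..<n} - \<rho> -` {j + 2..<n}"
      then have "\<sigma> m \<in> ?I" by auto
      then have mI: "m \<in> ?I" using permutes_in_image[OF s] by blast
      then have "\<rho> m \<in> ?I" using permutes_in_image[OF r] by blast
      then show "m \<in> {m \<in> ?I. \<rho> m < j + 2 \<and> j + 2 < \<sigma> m}" using m mI by auto
    next
      fix m assume m: "m \<in> {m \<in> ?I. \<rho> m < j + 2 \<and> j + 2 < \<sigma> m}"
      then have "\<sigma> m \<in> ?I" using permutes_in_image[OF s] by blast
      then show "m \<in> \<sigma> -` {j + 3..<n} - \<rho> -` {j + 2..<n}" using m by auto
    qed
    ultimately show ?thesis by simp
  qed
  have k1: "{m \<in> ?I. \<rho> m < 1 \<and> 1 < \<sigma> m} = {}"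
  proof -
    have "m \<in> ?I \<Longrightarrow> 1 \<le> \<rho> m" for m using permutes_in_image[OF r, of m] by auto
    then show ?thesis by fastforce
  qed
  show ?thesis
  proof (rule nth_equalityI)
    show "length (map (\<lambda>k. card {m \<in> ?I. \<rho> m < k \<and> k < \<sigma> m} + 1) [1..<n]) = length (1 # stl (hh n \<rho>) (tl (hh n \<sigma>)))"
      unfolding st using n by simp
    fix i assume i: "i < length (map (\<lambda>k. card {m \<in> ?I. \<rho> m < k \<and> k < \<sigma> m} + 1) [1..<n])"
    show "map (\<lambda>k. card {m \<in> ?I. \<rho> m < k \<and> k < \<sigma> m} + 1) [1..<n] ! i = (1 # stl (hh n \<rho>) (tl (hh n \<sigma>))) ! i"
    proof (cases i)
      case 0 then show ?thesis using i k1 by simp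
    next
      case (Suc j)
      have j: "j < n - 2" using i Suc by simp
      have "(1 # stl (hh n \<rho>) (tl (hh n \<sigma>))) ! i = stl (hh n \<rho>) (tl (hh n \<sigma>)) ! j" using Suc by simp
      also have "\<dots> = card (set (drop (Suc j) (map (inv \<sigma>) [2..<n])) - set (drop (Suc j) (hh n \<rho>))) + 1"
        unfolding st using j by simp
      also have "\<dots> = card {m \<in> ?I. \<rho> m < j + 2 \<and> j + 2 < \<sigma> m} + 1" using key[of j] by simp
      also have "\<dots> = map (\<lambda>k. card {m \<in> ?I. \<rho> m < k \<and> k < \<sigma> m} + 1) [1..<n] ! i"
        using i Suc by simp
      finally show ?thesis by simp
    qed
  qed
qed

theorem corollary8:
  fixes n :: nat
  assumes "n \<ge> 2"
  shows "U_process n = perm_process n"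
proof -
  let ?I = "{1..n - 1}"
  have ne: "{f. f permutes ?I} \<noteq> {}" using permutes_id by blast
  have fin: "finite {f. f permutes ?I}" using finite_permutations by blast
  have mh: "map_pmf (hh n) (unif_perm n) = PL ?I"
    unfolding unif_perm_def using map_pmf_of_set_bij_betw[OF hh_bij ne fin] assms by simp
  define Fc where "Fc = (\<lambda>(P, Q). 1 # stl P (tl Q :: nat list))"
  have "perm_process n = map_pmf (Fc \<circ> (\<lambda>(a, b). (hh n a, hh n b))) (pair_pmf (unif_perm n) (unif_perm n))"
    unfolding perm_process_def
  proof (rule map_pmf_cong[OF refl])
    fix z assume z: "z \<in> set_pmf (pair_pmf (unif_perm n) (unif_perm n))"
    obtain a b where ab: "z = (a, b)" by (cases z)
    have a: "a permutes ?I" and b: "b permutes ?I"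
      using z unfolding ab unif_perm_def set_pair_pmf set_pmf_of_set[OF ne fin] by auto
    show "(\<lambda>(\<rho>, \<sigma>). map (\<lambda>k. card {m \<in> ?I. \<rho> m < k \<and> k < \<sigma> m} + 1) [1..<n]) z =
          (Fc \<circ> (\<lambda>(a, b). (hh n a, hh n b))) z"
      unfolding ab using stat_eq[OF assms a b] by (simp add: Fc_def)
  qed
  also have "\<dots> = map_pmf Fc (pair_pmf (PL ?I) (PL ?I))"
    by (simp add: pmf.map_comp[symmetric] map_pair mh)
  also have "pair_pmf (PL ?I) (PL ?I) = bind_pmf (pmf_of_set ?I) (\<lambda>q.
        map_pmf (\<lambda>(P, Q0). (P, q # Q0)) (pair_pmf (PL ?I) (PL (?I - {q}))))"
  proof -
    have "pair_pmf (PL ?I) (PL ?I) = bind_pmf (PL ?I) (\<lambda>P. bind_pmf (pmf_of_set ?I) (\<lambda>q.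
        bind_pmf (PL (?I - {q})) (\<lambda>Q0. return_pmf (P, q # Q0))))"
      unfolding pair_pmf_def
      by (subst (2) random_permutation_of_set) (use assms in \<open>auto simp: bind_assoc_pmf bind_return_pmf\<close>)
    also have "\<dots> = bind_pmf (pmf_of_set ?I) (\<lambda>q. bind_pmf (PL ?I) (\<lambda>P.
        bind_pmf (PL (?I - {q})) (\<lambda>Q0. return_pmf (P, q # Q0))))"
      by (rule bind_commute_pmf)
    also have "\<dots> = bind_pmf (pmf_of_set ?I) (\<lambda>q.
        map_pmf (\<lambda>(P, Q0). (P, q # Q0)) (pair_pmf (PL ?I) (PL (?I - {q}))))"
      by (simp add: pair_pmf_def map_bind_pmf)
    finally show ?thesis .
  qed
  also have "map_pmf Fc (bind_pmf (pmf_of_set ?I) (\<lambda>q.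
        map_pmf (\<lambda>(P, Q0). (P, q # Q0)) (pair_pmf (PL ?I) (PL (?I - {q})))))
      = bind_pmf (pmf_of_set ?I) (\<lambda>q. map_pmf (Cons 1) (map_pmf (\<lambda>(P, Q). stl P Q) (pair_pmf (PL ?I) (PL (?I - {q})))))"
    by (simp add: map_bind_pmf pmf.map_comp Fc_def o_def case_prod_unfold)
  also have "\<dots> = bind_pmf (pmf_of_set ?I) (\<lambda>q. map_pmf (Cons 1) (V (n - 1) 1))"
  proof (rule bind_pmf_cong[OF refl])
    fix q assume "q \<in> set_pmf (pmf_of_set ?I)"
    then have q: "q \<in> ?I" using assms by auto
    have "map_pmf (\<lambda>(P, Q). stl P Q) (pair_pmf (PL ?I) (PL (?I - {q}))) = V (Suc (n - 2)) (card ((?I - {q}) - ?I) + 1)"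
      by (rule perm_V) (use q assms in auto)
    also have "Suc (n - 2) = n - 1" using assms by simp
    also have "(?I - {q}) - ?I = {}" by blast
    finally show "map_pmf (Cons 1) (map_pmf (\<lambda>(P, Q). stl P Q) (pair_pmf (PL ?I) (PL (?I - {q})))) = map_pmf (Cons 1) (V (n - 1) 1)"
      by simp
  qed
  also have "\<dots> = map_pmf (Cons 1) (V (n - 1) 1)" by simp
  also have "\<dots> = V n 0"
  proof -
    obtain t where t: "n = Suc (Suc t)" using assms by (metis add_2_eq_Suc le_Suc_ex)
    show ?thesis using step_n0[OF assms] unfolding t by (simp add: bind_return_pmf)
  qed
  also have "\<dots> = U_process n" using U_V assms by simp
  finally show ?thesis ..
qed

end
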